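(* For $\theta^*\in\Theta=\mathbb{R}^p$ let $P_{\theta^*}=\mathcal{N}(\theta^*,I_p)$, and consider data $X_1,\dots,X_n\stackrel{i.i.d.}{\sim}P$ where $W(P,P_{\theta^*})\le\epsilon$. There exist constants $C,c>0$ such that $$\inf_{\widehat\theta}\sup_{\theta^*\in\Theta,\;P:W(P_{\theta^*},P)\le\epsilon}\mathbb{P}\left(\|\theta^*-\widehat\theta\|_2\ge C\left(\sqrt{\frac pn}\vee\epsilon\right)\right)\ge c,$$ the infimum being over all estimators $\widehat\theta$ based on $X_1,\dots,X_n$.
   Context: $W$ is the Wasserstein-1 distance $W(P,Q)=\inf_\Pi\mathbb{E}_\Pi\|X-Y\|_2$ over couplings. $a\vee b=\max(a,b)$. *)

theory Defs
  imports "HOL-Probability.Probability"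
begin

text \<open>R^p is represented by the finite product measure over the index set {..<p}
  (elements are functions nat => real, extensional outside {..<p}).\<close>

definition Rp :: "nat \<Rightarrow> (nat \<Rightarrow> real) measure" where
  "Rp p = PiM {..<p} (\<lambda>_. lborel)"

definition euclid_dist :: "nat \<Rightarrow> (nat \<Rightarrow> real) \<Rightarrow> (nat \<Rightarrow> real) \<Rightarrow> real" where
  "euclid_dist p x y = sqrt (\<Sum>i<p. (x i - y i)\<^sup>2)"

definition gauss :: "nat \<Rightarrow> (nat \<Rightarrow> real) \<Rightarrow> (nat \<Rightarrow> real) measure" where
  "gauss p \<theta> = PiM {..<p} (\<lambda>i. density lborel (normal_density (\<theta> i) 1))"

definition couplings :: "nat \<Rightarrow> (nat \<Rightarrow> real) measure \<Rightarrow> (nat \<Rightarrow> real) measure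
    \<Rightarrow> ((nat \<Rightarrow> real) \<times> (nat \<Rightarrow> real)) measure set" where
  "couplings p P Q = {Q2. sets Q2 = sets (Rp p \<Otimes>\<^sub>M Rp p) \<and> prob_space Q2
      \<and> distr Q2 (Rp p) fst = P \<and> distr Q2 (Rp p) snd = Q}"

definition wasserstein1 :: "nat \<Rightarrow> (nat \<Rightarrow> real) measure \<Rightarrow> (nat \<Rightarrow> real) measure \<Rightarrow> ennreal" where
  "wasserstein1 p P Q = (INF Q2 \<in> couplings p P Q.
      \<integral>\<^sup>+ z. ennreal (euclid_dist p (fst z) (snd z)) \<partial>Q2)"

definition robust_model :: "nat \<Rightarrow> (nat \<Rightarrow> real) \<Rightarrow> real \<Rightarrow> (nat \<Rightarrow> real) measure set" where
  "robust_model p \<theta> \<epsilon> = {P. prob_space P \<and> sets P = sets (Rp p)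
      \<and> wasserstein1 p (gauss p \<theta>) P \<le> ennreal \<epsilon>}"

definition sample :: "nat \<Rightarrow> (nat \<Rightarrow> real) measure \<Rightarrow> (nat \<Rightarrow> nat \<Rightarrow> real) measure" where
  "sample n P = PiM {..<n} (\<lambda>_. P)"

definition estimators :: "nat \<Rightarrow> nat \<Rightarrow> ((nat \<Rightarrow> nat \<Rightarrow> real) \<Rightarrow> (nat \<Rightarrow> real)) set" where
  "estimators p n = PiM {..<n} (\<lambda>_. Rp p) \<rightarrow>\<^sub>M Rp p"

end

theory Submission
  imports Defs
begin


lemma PiM_density:
  fixes M :: "'i \<Rightarrow> 'a measure" and f :: "'i \<Rightarrow> 'a \<Rightarrow> ennreal"
  assumes I: "finite I"
    and sf: "\<And>i. sigma_finite_measure (M i)"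
    and sfd: "\<And>i. sigma_finite_measure (density (M i) (f i))"
    and f[measurable]: "\<And>i. f i \<in> borel_measurable (M i)"
  shows "PiM I (\<lambda>i. density (M i) (f i)) = density (PiM I M) (\<lambda>x. \<Prod>i\<in>I. f i (x i))"
proof -
  interpret D: product_sigma_finite "\<lambda>i. density (M i) (f i)"
    unfolding product_sigma_finite_def using sfd by auto
  interpret P: product_sigma_finite M
    unfolding product_sigma_finite_def using sf by auto
  have meas: "(\<lambda>x. \<Prod>i\<in>I. f i (x i)) \<in> borel_measurable (PiM I M)"
    by measurable
  show ?thesis
  proof (rule D.PiM_eqI[OF I, symmetric])
    show "sets (density (PiM I M) (\<lambda>x. \<Prod>i\<in>I. f i (x i))) = sets (PiM I (\<lambda>i. density (M i) (f i)))"
      by (simp only: sets_density) (rule sets_PiM_cong, simp_all)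
  next
    fix A assume A: "\<And>i. i \<in> I \<Longrightarrow> A i \<in> sets (density (M i) (f i))"
    then have A': "\<And>i. i \<in> I \<Longrightarrow> A i \<in> sets (M i)" by simp
    have "PiE I A \<in> sets (PiM I M)" using A' by (rule sets_PiM_I_finite[OF I])
    then have "emeasure (density (PiM I M) (\<lambda>x. \<Prod>i\<in>I. f i (x i))) (PiE I A)
        = (\<integral>\<^sup>+x. (\<Prod>i\<in>I. f i (x i)) * indicator (PiE I A) x \<partial>PiM I M)"
      using meas by (simp add: emeasure_density)
    also have "\<dots> = (\<integral>\<^sup>+x. (\<Prod>i\<in>I. f i (x i) * indicator (A i) (x i)) \<partial>PiM I M)"
    proof (rule nn_integral_cong)
      fix x assume "x \<in> space (PiM I M)"
      then have "x \<in> extensional I" by (simp add: space_PiM PiE_def)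
      then have "indicator (PiE I A) x = (\<Prod>i\<in>I. indicator (A i) (x i) :: ennreal)"
      proof (cases "x \<in> PiE I A")
        case True then show ?thesis by (auto simp: indicator_def PiE_def Pi_def intro!: prod.neutral[symmetric])
      next
        case False
        with \<open>x \<in> extensional I\<close> obtain i where "i \<in> I" "x i \<notin> A i" by (auto simp: PiE_def Pi_def)
        then show ?thesis using False I by (auto simp: indicator_def intro!: prod_zero[symmetric])
      qed
      then show "(\<Prod>i\<in>I. f i (x i)) * indicator (PiE I A) x = (\<Prod>i\<in>I. f i (x i) * indicator (A i) (x i))"
        by (simp add: prod.distrib)
    qed
    also have "\<dots> = (\<Prod>i\<in>I. \<integral>\<^sup>+t. f i t * indicator (A i) t \<partial>M i)"
      using A' by (intro P.product_nn_integral_prod[OF I]) auto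
    also have "\<dots> = (\<Prod>i\<in>I. emeasure (density (M i) (f i)) (A i))"
      using A' by (intro prod.cong refl) (simp add: emeasure_density)
    finally show "emeasure (density (PiM I M) (\<lambda>x. \<Prod>i\<in>I. f i (x i))) (PiE I A) = (\<Prod>i\<in>I. emeasure (density (M i) (f i)) (A i))" .
  qed
qed



lemma nn_integral_normal_density: "\<sigma> > 0 \<Longrightarrow> (\<integral>\<^sup>+t. ennreal (normal_density \<mu> \<sigma> t) \<partial>lborel) = 1"
  by (subst nn_integral_eq_integral) (auto simp: normal_density_nonneg)

lemma gauss_integral:
  fixes A B :: real
  assumes A: "A > 0"
  shows "(\<integral>\<^sup>+t. ennreal (exp (- A * t\<^sup>2 + B * t)) \<partial>lborel) = ennreal (sqrt (pi / A) * exp (B\<^sup>2 / (4*A)))"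
proof -
  define \<mu> where "\<mu> = B / (2*A)"
  define \<sigma> where "\<sigma> = 1 / sqrt (2*A)"
  have s2: "\<sigma>\<^sup>2 = 1 / (2*A)" using A by (simp add: \<sigma>_def power_divide)
  have pw: "exp (- A * t\<^sup>2 + B * t) = sqrt (pi / A) * exp (B\<^sup>2 / (4*A)) * normal_density \<mu> \<sigma> t" for t
  proof -
    have e: "B\<^sup>2 / (4*A) + (-(t - \<mu>)\<^sup>2 / (2 * \<sigma>\<^sup>2)) = - A * t\<^sup>2 + B * t"
      using A unfolding s2 \<mu>_def by (simp add: field_simps power2_eq_square)
    have "2 * pi * \<sigma>\<^sup>2 = pi / A" using A unfolding s2 by simp
    then have h1: "sqrt (pi / A) * (1 / sqrt (2 * pi * \<sigma>\<^sup>2)) = 1" using A by simp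
    have "sqrt (pi / A) * exp (B\<^sup>2 / (4*A)) * normal_density \<mu> \<sigma> t
        = (sqrt (pi / A) * (1 / sqrt (2 * pi * \<sigma>\<^sup>2))) * (exp (B\<^sup>2 / (4*A)) * exp (-(t - \<mu>)\<^sup>2 / (2 * \<sigma>\<^sup>2)))"
      unfolding normal_density_def by (simp only: mult_ac)
    also have "\<dots> = exp (B\<^sup>2 / (4*A)) * exp (-(t - \<mu>)\<^sup>2 / (2 * \<sigma>\<^sup>2))"
      unfolding h1 by (rule mult_1)
    also have "\<dots> = exp (- A * t\<^sup>2 + B * t)" by (subst exp_add[symmetric]) (simp only: e)
    finally show ?thesis by simp
  qed
  have "(\<integral>\<^sup>+t. ennreal (exp (- A * t\<^sup>2 + B * t)) \<partial>lborel)
      = (\<integral>\<^sup>+t. ennreal (sqrt (pi / A) * exp (B\<^sup>2 / (4*A))) * ennreal (normal_density \<mu> \<sigma> t) \<partial>lborel)"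
    by (intro nn_integral_cong, subst pw, rule ennreal_mult) (use A in \<open>auto simp: normal_density_nonneg\<close>)
  also have "\<dots> = ennreal (sqrt (pi / A) * exp (B\<^sup>2 / (4*A))) * (\<integral>\<^sup>+t. ennreal (normal_density \<mu> \<sigma> t) \<partial>lborel)"
    by (rule nn_integral_cmult) simp
  also have "\<dots> = ennreal (sqrt (pi / A) * exp (B\<^sup>2 / (4*A)))"
    using A by (simp add: nn_integral_normal_density \<sigma>_def)
  finally show ?thesis .
qed


lemma gauss_exponent_ineq:
  fixes a l S b :: real
  assumes a: "a > 0" and l: "l > 0"
  shows "- l * b\<^sup>2 + (S + 2*l*b)\<^sup>2 / (4*(a+l)) \<le> S\<^sup>2 / (4*a)"
proof -
  have eq: "(a+l) * (S\<^sup>2 + 4*a*l*b\<^sup>2) - a * (S + 2*l*b)\<^sup>2 = l * (S - 2*a*b)\<^sup>2"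
    by (simp add: power2_eq_square algebra_simps)
  have "a * (S + 2*l*b)\<^sup>2 \<le> (a+l) * (S\<^sup>2 + 4*a*l*b\<^sup>2)"
    using eq l by (smt (verit) mult_nonneg_nonneg zero_le_power2)
  note h = this
  have "(S + 2*l*b)\<^sup>2 / (4*(a+l)) = (a * (S + 2*l*b)\<^sup>2) / (a*(4*(a+l)))"
    using a l by simp
  also have "\<dots> \<le> ((a+l) * (S\<^sup>2 + 4*a*l*b\<^sup>2)) / (a*(4*(a+l)))"
    by (rule divide_right_mono) (use h a l in auto)
  also have "\<dots> = ((a+l) * (S\<^sup>2 + 4*a*l*b\<^sup>2)) / ((a+l)*(4*a))"
    by (simp only: mult_ac)
  also have "\<dots> = (S\<^sup>2 + 4*a*l*b\<^sup>2) / (4*a)"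
    using a l by simp
  also have "\<dots> = S\<^sup>2 / (4*a) + l * b\<^sup>2" using a by (simp add: field_simps)
  finally show ?thesis by simp
qed

lemma gauss_compare:
  fixes a l K S b :: real
  assumes a: "a > 0" and l: "l > 0" and K: "K \<ge> 0"
  shows "(\<integral>\<^sup>+t. ennreal (K * exp (- a * t\<^sup>2 + S * t) * exp (- l * (t - b)\<^sup>2)) \<partial>lborel)
    \<le> ennreal (sqrt (a / (a + l))) * (\<integral>\<^sup>+t. ennreal (K * exp (- a * t\<^sup>2 + S * t)) \<partial>lborel)"
proof -
  have pw: "K * exp (- a * t\<^sup>2 + S * t) * exp (- l * (t - b)\<^sup>2)
      = (K * exp (- l * b\<^sup>2)) * exp (- (a + l) * t\<^sup>2 + (S + 2*l*b) * t)" for t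
  proof -
    have "- a * t\<^sup>2 + S * t + - l * (t - b)\<^sup>2 = - l * b\<^sup>2 + (- (a + l) * t\<^sup>2 + (S + 2*l*b) * t)"
      by (simp add: power2_eq_square algebra_simps)
    then show ?thesis by (simp add: exp_add[symmetric] mult.assoc)
  qed
  have "(\<integral>\<^sup>+t. ennreal (K * exp (- a * t\<^sup>2 + S * t) * exp (- l * (t - b)\<^sup>2)) \<partial>lborel)
      = (\<integral>\<^sup>+t. ennreal (K * exp (- l * b\<^sup>2)) * ennreal (exp (- (a + l) * t\<^sup>2 + (S + 2*l*b) * t)) \<partial>lborel)"
    by (intro nn_integral_cong, subst pw, rule ennreal_mult) (use K in auto)
  also have "\<dots> = ennreal (K * exp (- l * b\<^sup>2)) * ennreal (sqrt (pi / (a+l)) * exp ((S + 2*l*b)\<^sup>2 / (4*(a+l))))"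
    using a l by (subst nn_integral_cmult, simp, subst gauss_integral) auto
  also have "\<dots> = ennreal (K * sqrt (pi / (a+l)) * exp (- l * b\<^sup>2 + (S + 2*l*b)\<^sup>2 / (4*(a+l))))"
  proof -
    have eq: "K * exp (- l * b\<^sup>2) * (sqrt (pi / (a+l)) * exp ((S + 2*l*b)\<^sup>2 / (4*(a+l))))
       = K * sqrt (pi / (a+l)) * exp (- l * b\<^sup>2 + (S + 2*l*b)\<^sup>2 / (4*(a+l)))"
      by (simp only: exp_add mult_ac)
    have n1: "0 \<le> K * exp (- l * b\<^sup>2)" using K by simp
    have n2: "0 \<le> sqrt (pi / (a+l)) * exp ((S + 2*l*b)\<^sup>2 / (4*(a+l)))" using a l by simp
    show ?thesis unfolding ennreal_mult[OF n1 n2, symmetric] eq ..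
  qed
  also have "\<dots> \<le> ennreal (K * sqrt (pi / (a+l)) * exp (S\<^sup>2 / (4*a)))"
    using gauss_exponent_ineq[OF a l, of b S] K a l
    by (intro ennreal_leI mult_left_mono) auto
  also have "K * sqrt (pi / (a+l)) = sqrt (a / (a + l)) * K * sqrt (pi / a)"
    using a l by (simp add: real_sqrt_mult[symmetric] mult_ac)
  also have "ennreal (sqrt (a / (a + l)) * K * sqrt (pi / a) * exp (S\<^sup>2 / (4*a)))
      = ennreal (sqrt (a / (a + l))) * (ennreal K * ennreal (sqrt (pi / a) * exp (S\<^sup>2 / (4*a))))"
    using K a l by (simp add: ennreal_mult[symmetric] mult_ac)
  also have "ennreal (sqrt (pi / a) * exp (S\<^sup>2 / (4*a))) = (\<integral>\<^sup>+t. ennreal (exp (- a * t\<^sup>2 + S * t)) \<partial>lborel)"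
    using gauss_integral[OF a, of S] by simp
  also have "ennreal K * \<dots> = (\<integral>\<^sup>+t. ennreal (K * exp (- a * t\<^sup>2 + S * t)) \<partial>lborel)"
    using K by (subst nn_integral_cmult[symmetric]) (auto simp: ennreal_mult)
  finally show ?thesis .
qed




lemma sf_Rp: "sigma_finite_measure (Rp p)"
proof -
  interpret product_sigma_finite "\<lambda>_::nat. lborel :: real measure"
    unfolding product_sigma_finite_def by (simp add: sigma_finite_lborel)
  show ?thesis unfolding Rp_def by (rule sigma_finite) simp
qed

lemma space_Rp: "space (Rp p) = PiE {..<p} (\<lambda>_. UNIV)"
  by (simp add: Rp_def space_PiM)

lemma normal_prod_density:
  assumes "\<sigma> > 0"
  shows "PiM {..<p} (\<lambda>i. density lborel (normal_density (m i) \<sigma>))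
    = density (Rp p) (\<lambda>x. ennreal (\<Prod>i<p. normal_density (m i) \<sigma> (x i)))"
proof -
  have "PiM {..<p} (\<lambda>i. density lborel (\<lambda>t. ennreal (normal_density (m i) \<sigma> t)))
    = density (PiM {..<p} (\<lambda>_. lborel)) (\<lambda>x. \<Prod>i<p. ennreal (normal_density (m i) \<sigma> (x i)))"
    by (rule PiM_density) (use assms in \<open>auto simp: sigma_finite_lborel prob_space_normal_density prob_space_imp_sigma_finite\<close>)
  also have "\<dots> = density (Rp p) (\<lambda>x. ennreal (\<Prod>i<p. normal_density (m i) \<sigma> (x i)))"
    unfolding Rp_def by (simp add: prod_ennreal normal_density_nonneg)
  finally show ?thesis by simp
qed

lemma prob_space_normal_prod: "\<sigma> > 0 \<Longrightarrow> prob_space (PiM {..<p} (\<lambda>i. density lborel (normal_density (m i) \<sigma>)))"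
  by (rule prob_space_PiM) (simp add: prob_space_normal_density)

lemma gauss_density: "gauss p \<theta> = density (Rp p) (\<lambda>x. ennreal (\<Prod>i<p. normal_density (\<theta> i) 1 (x i)))"
  unfolding gauss_def by (rule normal_prod_density) simp

lemma prob_space_gauss: "prob_space (gauss p \<theta>)"
  unfolding gauss_def by (rule prob_space_normal_prod) simp

lemma sets_gauss: "sets (gauss p \<theta>) = sets (Rp p)"
  by (simp add: gauss_density)

definition lik :: "nat \<Rightarrow> nat \<Rightarrow> (nat \<Rightarrow> real) \<Rightarrow> (nat \<Rightarrow> nat \<Rightarrow> real) \<Rightarrow> real" where
  "lik p n \<theta> X = (\<Prod>j<n. \<Prod>i<p. normal_density (\<theta> i) 1 (X j i))"

lemma lik_nonneg: "lik p n \<theta> X \<ge> 0"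
  unfolding lik_def by (intro prod_nonneg) (simp add: normal_density_nonneg)

lemma sample_density: "sample n (gauss p \<theta>) = density (PiM {..<n} (\<lambda>_. Rp p)) (\<lambda>X. ennreal (lik p n \<theta> X))"
proof -
  have "sample n (gauss p \<theta>) = PiM {..<n} (\<lambda>_. density (Rp p) (\<lambda>x. ennreal (\<Prod>i<p. normal_density (\<theta> i) 1 (x i))))"
    unfolding sample_def gauss_density ..
  also have "\<dots> = density (PiM {..<n} (\<lambda>_. Rp p)) (\<lambda>X. \<Prod>j<n. ennreal (\<Prod>i<p. normal_density (\<theta> i) 1 (X j i)))"
  proof (rule PiM_density)
    show "(\<lambda>x. ennreal (\<Prod>i<p. normal_density (\<theta> i) 1 (x i))) \<in> borel_measurable (Rp p)"
      unfolding Rp_def by measurable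
  qed (auto simp: sf_Rp prob_space_gauss[unfolded gauss_density] prob_space_imp_sigma_finite)
  also have "\<dots> = density (PiM {..<n} (\<lambda>_. Rp p)) (\<lambda>X. ennreal (lik p n \<theta> X))"
    unfolding lik_def by (subst prod_ennreal) (auto intro!: prod_nonneg simp: normal_density_nonneg)
  finally show ?thesis .
qed




lemma shift_preimage_borel:
  fixes A :: "real set"
  assumes A: "A \<in> sets borel"
  shows "(\<lambda>t. t + c) -` A \<in> sets borel"
proof -
  have "(\<lambda>t::real. t + c) \<in> measurable borel borel" by measurable
  then have "(\<lambda>t. t + c) -` A \<inter> space borel \<in> sets borel" using A by (rule measurable_sets)
  then show ?thesis by simp
qed

lemma normal_shift_emeasure:
  assumes A: "A \<in> sets borel"
  shows "emeasure (density lborel (normal_density \<mu> 1)) ((\<lambda>t. t + c) -` A)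
    = emeasure (density lborel (normal_density (\<mu> + c) 1)) A"
proof -
  have m: "(\<lambda>t. t + c) -` A \<in> sets borel" using A by (rule shift_preimage_borel)
  have "emeasure (density lborel (normal_density (\<mu> + c) 1)) A
      = (\<integral>\<^sup>+u. ennreal (normal_density (\<mu> + c) 1 u) * indicator A u \<partial>lborel)"
    using A by (simp add: emeasure_density)
  also have "\<dots> = ennreal \<bar>1::real\<bar> * (\<integral>\<^sup>+x. ennreal (normal_density (\<mu> + c) 1 (c + 1 * x)) * indicator A (c + 1 * x) \<partial>lborel)"
    by (rule nn_integral_real_affine) (use A in auto)
  also have "\<dots> = (\<integral>\<^sup>+x. ennreal (normal_density \<mu> 1 x) * indicator ((\<lambda>t. t + c) -` A) x \<partial>lborel)"
    unfolding abs_one ennreal_1 mult_1_left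
    by (intro nn_integral_cong) (simp add: normal_density_def indicator_def add.commute)
  also have "\<dots> = emeasure (density lborel (normal_density \<mu> 1)) ((\<lambda>t. t + c) -` A)"
    using m by (simp add: emeasure_density)
  finally show ?thesis by simp
qed

lemma gauss_translate:
  "distr (gauss p \<theta>) (Rp p) (\<lambda>x. \<lambda>i\<in>{..<p}. x i + c i) = gauss p (\<lambda>i. \<theta> i + c i)"
proof -
  interpret D: product_sigma_finite "\<lambda>i. density lborel (normal_density (\<theta> i + c i) 1)"
    unfolding product_sigma_finite_def by (auto simp: prob_space_normal_density prob_space_imp_sigma_finite)
  interpret E: product_sigma_finite "\<lambda>i. density lborel (normal_density (\<theta> i) 1)"
    unfolding product_sigma_finite_def by (auto simp: prob_space_normal_density prob_space_imp_sigma_finite)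
  have Tm: "(\<lambda>x. \<lambda>i\<in>{..<p}. x i + c i) \<in> measurable (Rp p) (Rp p)"
    unfolding Rp_def by measurable
  show ?thesis unfolding gauss_def
  proof (rule D.PiM_eqI)
    show "sets (distr (PiM {..<p} (\<lambda>i. density lborel (normal_density (\<theta> i) 1))) (Rp p) (\<lambda>x. \<lambda>i\<in>{..<p}. x i + c i))
      = sets (PiM {..<p} (\<lambda>i. density lborel (normal_density (\<theta> i + c i) 1)))"
      unfolding Rp_def by (simp only: sets_distr) (rule sets_PiM_cong, simp_all)
  next
    fix A assume A: "\<And>i. i \<in> {..<p} \<Longrightarrow> A i \<in> sets (density lborel (normal_density (\<theta> i + c i) 1))"
    then have A': "\<And>i. i \<in> {..<p} \<Longrightarrow> A i \<in> sets borel" by simp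
    have PA: "PiE {..<p} A \<in> sets (Rp p)"
      unfolding Rp_def using A' by (intro sets_PiM_I_finite) auto
    have sE: "sets (PiM {..<p} (\<lambda>i. density lborel (normal_density (\<theta> i) 1))) = sets (Rp p)"
      unfolding Rp_def by (rule sets_PiM_cong) simp_all
    have spE: "space (PiM {..<p} (\<lambda>i. density lborel (normal_density (\<theta> i) 1))) = PiE {..<p} (\<lambda>_. UNIV)"
      by (simp add: space_PiM)
    have Tm': "(\<lambda>x. \<lambda>i\<in>{..<p}. x i + c i) \<in> measurable (PiM {..<p} (\<lambda>i. density lborel (normal_density (\<theta> i) 1))) (Rp p)"
      unfolding measurable_cong_sets[OF sE refl] using Tm .
    have pre: "(\<lambda>x. \<lambda>i\<in>{..<p}. x i + c i) -` PiE {..<p} A \<inter> space (PiM {..<p} (\<lambda>i. density lborel (normal_density (\<theta> i) 1)))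
      = PiE {..<p} (\<lambda>i. (\<lambda>t. t + c i) -` A i)"
      unfolding spE by (auto simp: PiE_iff)
    have "emeasure (distr (PiM {..<p} (\<lambda>i. density lborel (normal_density (\<theta> i) 1))) (Rp p) (\<lambda>x. \<lambda>i\<in>{..<p}. x i + c i)) (PiE {..<p} A)
      = emeasure (PiM {..<p} (\<lambda>i. density lborel (normal_density (\<theta> i) 1))) (PiE {..<p} (\<lambda>i. (\<lambda>t. t + c i) -` A i))"
      using Tm' PA by (simp add: emeasure_distr pre)
    also have "\<dots> = (\<Prod>i<p. emeasure (density lborel (normal_density (\<theta> i) 1)) ((\<lambda>t. t + c i) -` A i))"
      using A' by (subst E.emeasure_PiM) (auto intro: shift_preimage_borel)
    also have "\<dots> = (\<Prod>i<p. emeasure (density lborel (normal_density (\<theta> i + c i) 1)) (A i))"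
      using A' by (intro prod.cong refl normal_shift_emeasure) auto
    finally show "emeasure (distr (PiM {..<p} (\<lambda>i. density lborel (normal_density (\<theta> i) 1))) (Rp p) (\<lambda>x. \<lambda>i\<in>{..<p}. x i + c i)) (PiE {..<p} A)
      = (\<Prod>i\<in>{..<p}. emeasure (density lborel (normal_density (\<theta> i + c i) 1)) (A i))" by simp
  qed simp
qed




lemma W_gauss: "wasserstein1 p (gauss p \<theta>) (gauss p \<theta>') \<le> ennreal (euclid_dist p \<theta> \<theta>')"
proof -
  define c where "c i = \<theta>' i - \<theta> i" for i
  define T where "T x = (\<lambda>i\<in>{..<p}. x i + c i)" for x :: "nat \<Rightarrow> real"
  define Q where "Q = distr (gauss p \<theta>) (Rp p \<Otimes>\<^sub>M Rp p) (\<lambda>x. (x, T x))"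
  have g': "gauss p \<theta>' = gauss p (\<lambda>i. \<theta> i + c i)" by (simp add: c_def)
  have mc: "measurable (gauss p \<theta>) N = measurable (Rp p) N" for N
    by (rule measurable_cong_sets[OF sets_gauss refl])
  have Tm: "T \<in> measurable (Rp p) (Rp p)" unfolding T_def Rp_def by measurable
  have idm: "(\<lambda>x. x) \<in> measurable (Rp p) (Rp p)" by simp
  have Pm: "(\<lambda>x. (x, T x)) \<in> measurable (gauss p \<theta>) (Rp p \<Otimes>\<^sub>M Rp p)"
    unfolding mc by (intro measurable_Pair idm Tm)
  interpret G: prob_space "gauss p \<theta>" by (rule prob_space_gauss)
  have fst: "distr Q (Rp p) fst = gauss p \<theta>"
  proof -
    have "distr Q (Rp p) fst = distr (gauss p \<theta>) (Rp p) (fst \<circ> (\<lambda>x. (x, T x)))"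
      unfolding Q_def by (rule distr_distr[OF measurable_fst Pm])
    also have "\<dots> = distr (gauss p \<theta>) (Rp p) (\<lambda>x. x)" by (simp add: comp_def)
    also have "\<dots> = gauss p \<theta>" by (rule distr_id2) (simp add: sets_gauss)
    finally show ?thesis .
  qed
  have snd: "distr Q (Rp p) snd = gauss p \<theta>'"
  proof -
    have "distr Q (Rp p) snd = distr (gauss p \<theta>) (Rp p) (snd \<circ> (\<lambda>x. (x, T x)))"
      unfolding Q_def by (rule distr_distr[OF measurable_snd Pm])
    also have "\<dots> = distr (gauss p \<theta>) (Rp p) T" by (simp add: comp_def)
    also have "\<dots> = gauss p \<theta>'" unfolding g' T_def by (rule gauss_translate)
    finally show ?thesis .
  qed
  have QC: "Q \<in> couplings p (gauss p \<theta>) (gauss p \<theta>')"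
    unfolding couplings_def using fst snd Pm
    by (auto simp: Q_def intro: G.prob_space_distr)
  have dm: "(\<lambda>z. ennreal (euclid_dist p (fst z) (snd z))) \<in> borel_measurable (Rp p \<Otimes>\<^sub>M Rp p)"
    unfolding euclid_dist_def Rp_def by measurable
  have dm': "(\<lambda>z. ennreal (euclid_dist p (fst z) (snd z))) \<in> borel_measurable (distr (gauss p \<theta>) (Rp p \<Otimes>\<^sub>M Rp p) (\<lambda>x. (x, T x)))"
    using dm by (simp only: measurable_distr_eq1)
  have "(\<integral>\<^sup>+z. ennreal (euclid_dist p (fst z) (snd z)) \<partial>Q)
      = (\<integral>\<^sup>+x. ennreal (euclid_dist p x (T x)) \<partial>gauss p \<theta>)"
    unfolding Q_def nn_integral_distr[OF Pm dm'] fst_conv snd_conv ..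
  also have "\<dots> = (\<integral>\<^sup>+x. ennreal (euclid_dist p \<theta> \<theta>') \<partial>gauss p \<theta>)"
    by (intro nn_integral_cong) (simp add: euclid_dist_def T_def c_def power2_commute)
  also have "\<dots> = ennreal (euclid_dist p \<theta> \<theta>')"
    by (simp only: nn_integral_const G.emeasure_space_1 mult_1_right)
  finally have "(\<integral>\<^sup>+z. ennreal (euclid_dist p (fst z) (snd z)) \<partial>Q) = ennreal (euclid_dist p \<theta> \<theta>')" .
  then show ?thesis unfolding wasserstein1_def
    using INF_lower[OF QC, of "\<lambda>Q2. \<integral>\<^sup>+z. ennreal (euclid_dist p (fst z) (snd z)) \<partial>Q2"] by simp
qed




lemma nd_factor: "normal_density t 1 y = normal_density 0 1 y * exp (y * t - t\<^sup>2 / 2)"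
proof -
  have "-(y - t)\<^sup>2 / 2 = -(y - 0)\<^sup>2 / 2 + (y * t - t\<^sup>2 / 2)"
    by (simp add: power2_eq_square field_simps)
  then have e: "exp (-(y - t)\<^sup>2 / 2) = exp (-(y - 0)\<^sup>2 / 2) * exp (y * t - t\<^sup>2 / 2)"
    by (simp only: exp_add[symmetric])
  show ?thesis unfolding normal_density_def power_one mult_1_right e by (simp only: mult.assoc)
qed

lemma nd_prior:
  assumes n: "n > (0::real)"
  shows "normal_density 0 (1 / sqrt n) t = normal_density 0 (1 / sqrt n) 0 * exp (- (n / 2) * t\<^sup>2)"
proof -
  have s: "(1 / sqrt n)\<^sup>2 = 1 / n" using n by (simp add: power_divide)
  have "-(t - 0)\<^sup>2 / (2 * (1 / sqrt n)\<^sup>2) = - (n / 2) * t\<^sup>2"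
    unfolding s using n by (simp add: field_simps)
  then show ?thesis unfolding normal_density_def by simp
qed

lemma product_form:
  fixes y :: "nat \<Rightarrow> real" and n :: nat
  assumes n: "n \<ge> 1"
  shows "normal_density 0 (1 / sqrt n) t * (\<Prod>j<n. normal_density t 1 (y j))
    = (normal_density 0 (1 / sqrt n) 0 * (\<Prod>j<n. normal_density 0 1 (y j)))
       * exp (- real n * t\<^sup>2 + (\<Sum>j<n. y j) * t)"
proof -
  have "(\<Prod>j<n. normal_density t 1 (y j)) = (\<Prod>j<n. normal_density 0 1 (y j) * exp (y j * t - t\<^sup>2 / 2))"
    by (intro prod.cong refl nd_factor)
  also have "\<dots> = (\<Prod>j<n. normal_density 0 1 (y j)) * exp (\<Sum>j<n. y j * t - t\<^sup>2 / 2)"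
    by (simp add: prod.distrib exp_sum)
  also have "(\<Sum>j<n. y j * t - t\<^sup>2 / 2) = (\<Sum>j<n. y j) * t - real n * t\<^sup>2 / 2"
    by (simp add: sum_subtractf sum_distrib_right)
  finally have 1: "(\<Prod>j<n. normal_density t 1 (y j)) = (\<Prod>j<n. normal_density 0 1 (y j)) * exp ((\<Sum>j<n. y j) * t - real n * t\<^sup>2 / 2)" .
  have 2: "normal_density 0 (1 / sqrt n) t = normal_density 0 (1 / sqrt n) 0 * exp (- (real n / 2) * t\<^sup>2)"
    using n by (intro nd_prior) simp
  have 3: "- (real n / 2) * t\<^sup>2 + ((\<Sum>j<n. y j) * t - real n * t\<^sup>2 / 2) = - real n * t\<^sup>2 + (\<Sum>j<n. y j) * t"
    by (simp add: algebra_simps)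
  show ?thesis unfolding 1 2 3[symmetric] exp_add by (simp only: mult_ac)
qed

lemma coord_bound:
  fixes y :: "nat \<Rightarrow> real" and n :: nat
  assumes n: "n \<ge> 1"
  shows "(\<integral>\<^sup>+t. ennreal (normal_density 0 (1 / sqrt n) t * (\<Prod>j<n. normal_density t 1 (y j)) * exp (- (3 * real n) * (t - b)\<^sup>2)) \<partial>lborel)
    \<le> ennreal (1/2) * (\<integral>\<^sup>+t. ennreal (normal_density 0 (1 / sqrt n) t * (\<Prod>j<n. normal_density t 1 (y j))) \<partial>lborel)"
proof -
  define K where "K = normal_density 0 (1 / sqrt n) 0 * (\<Prod>j<n. normal_density 0 1 (y j))"
  define S where "S = (\<Sum>j<n. y j)"
  have K: "K \<ge> 0" unfolding K_def by (intro mult_nonneg_nonneg prod_nonneg) (auto simp: normal_density_nonneg)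
  have pf: "normal_density 0 (1 / sqrt n) t * (\<Prod>j<n. normal_density t 1 (y j)) = K * exp (- real n * t\<^sup>2 + S * t)" for t
    unfolding K_def S_def by (rule product_form[OF n])
  have h: "sqrt (real n / (real n + 3 * real n)) = 1/2"
  proof -
    have "real n / (real n + 3 * real n) = (1/2)\<^sup>2" using n by (simp add: power2_eq_square)
    then show ?thesis by simp
  qed
  have "(\<integral>\<^sup>+t. ennreal (normal_density 0 (1 / sqrt n) t * (\<Prod>j<n. normal_density t 1 (y j)) * exp (- (3 * real n) * (t - b)\<^sup>2)) \<partial>lborel)
     = (\<integral>\<^sup>+t. ennreal (K * exp (- real n * t\<^sup>2 + S * t) * exp (- (3 * real n) * (t - b)\<^sup>2)) \<partial>lborel)"
    by (simp only: pf)
  also have "\<dots> \<le> ennreal (sqrt (real n / (real n + 3 * real n))) * (\<integral>\<^sup>+t. ennreal (K * exp (- real n * t\<^sup>2 + S * t)) \<partial>lborel)"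
    by (rule gauss_compare) (use n K in auto)
  also have "\<dots> = ennreal (1/2) * (\<integral>\<^sup>+t. ennreal (normal_density 0 (1 / sqrt n) t * (\<Prod>j<n. normal_density t 1 (y j))) \<partial>lborel)"
    by (simp only: pf h)
  finally show ?thesis .
qed




definition pd :: "nat \<Rightarrow> nat \<Rightarrow> (nat \<Rightarrow> real) \<Rightarrow> real" where
  "pd p n \<theta> = (\<Prod>i<p. normal_density 0 (1 / sqrt n) (\<theta> i))"

definition Fb :: "nat \<Rightarrow> nat \<Rightarrow> ((nat \<Rightarrow> nat \<Rightarrow> real) \<Rightarrow> (nat \<Rightarrow> real)) \<Rightarrow> real \<Rightarrow> (nat \<Rightarrow> real) \<Rightarrow> (nat \<Rightarrow> nat \<Rightarrow> real) \<Rightarrow> real" where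
  "Fb p n a r \<theta> X = exp (3 * real n * r\<^sup>2) * exp (- (3 * real n) * (\<Sum>i<p. (\<theta> i - a X i)\<^sup>2)) * lik p n \<theta> X"

lemma nd_measurable[measurable (raw)]:
  assumes [measurable]: "f \<in> borel_measurable M" "g \<in> borel_measurable M"
  shows "(\<lambda>x. normal_density (f x) \<sigma> (g x)) \<in> borel_measurable M"
  unfolding normal_density_def by measurable

lemma meas_joint:
  assumes a: "a \<in> measurable (PiM {..<n} (\<lambda>_. Rp p)) (Rp p)"
  shows "(\<lambda>z. ennreal (pd p n (fst z) * Fb p n a r (fst z) (snd z))) \<in> borel_measurable (Rp p \<Otimes>\<^sub>M PiM {..<n} (\<lambda>_. Rp p))"
    and "(\<lambda>z. ennreal (pd p n (fst z) * lik p n (fst z) (snd z))) \<in> borel_measurable (Rp p \<Otimes>\<^sub>M PiM {..<n} (\<lambda>_. Rp p))"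
    and "(\<lambda>z. ennreal (Fb p n a r (fst z) (snd z))) \<in> borel_measurable (Rp p \<Otimes>\<^sub>M PiM {..<n} (\<lambda>_. Rp p))"
proof -
  note a' = a[unfolded Rp_def]
  have ai[measurable]: "\<And>i. i \<in> {..<p} \<Longrightarrow> (\<lambda>x. a x i) \<in> borel_measurable (PiM {..<n} (\<lambda>_. PiM {..<p} (\<lambda>_. lborel)))"
  proof -
    fix i :: nat assume "i \<in> {..<p}"
    then have "(\<lambda>x. x i) \<in> measurable (PiM {..<p} (\<lambda>_. lborel :: real measure)) lborel"
      by (rule measurable_component_singleton)
    from measurable_compose[OF a' this] show "(\<lambda>x. a x i) \<in> borel_measurable (PiM {..<n} (\<lambda>_. PiM {..<p} (\<lambda>_. lborel)))"
      by simp
  qed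
  have sji[measurable]: "\<And>j i. j \<in> {..<n} \<Longrightarrow> i \<in> {..<p} \<Longrightarrow> (\<lambda>x. snd x j i) \<in> borel_measurable (PiM {..<p} (\<lambda>_. lborel :: real measure) \<Otimes>\<^sub>M PiM {..<n} (\<lambda>_. PiM {..<p} (\<lambda>_. lborel :: real measure)))"
  proof -
    fix j i :: nat assume j: "j \<in> {..<n}" and i: "i \<in> {..<p}"
    have 1: "(\<lambda>x. x j) \<in> measurable (PiM {..<n} (\<lambda>_. PiM {..<p} (\<lambda>_. lborel :: real measure))) (PiM {..<p} (\<lambda>_. lborel))"
      using j by (rule measurable_component_singleton)
    have 2: "(\<lambda>x. x i) \<in> measurable (PiM {..<p} (\<lambda>_. lborel :: real measure)) lborel"
      using i by (rule measurable_component_singleton)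
    show "(\<lambda>x. snd x j i) \<in> borel_measurable (PiM {..<p} (\<lambda>_. lborel :: real measure) \<Otimes>\<^sub>M PiM {..<n} (\<lambda>_. PiM {..<p} (\<lambda>_. lborel :: real measure)))"
    proof -
      note c = measurable_compose[OF measurable_compose[OF measurable_snd 1] 2, of "PiM {..<p} (\<lambda>_. lborel :: real measure)"]
      show ?thesis using c by (simp add: comp_def)
    qed
  qed
  show "(\<lambda>z. ennreal (pd p n (fst z) * Fb p n a r (fst z) (snd z))) \<in> borel_measurable (Rp p \<Otimes>\<^sub>M PiM {..<n} (\<lambda>_. Rp p))"
    unfolding pd_def Fb_def lik_def Rp_def by measurable
  show "(\<lambda>z. ennreal (pd p n (fst z) * lik p n (fst z) (snd z))) \<in> borel_measurable (Rp p \<Otimes>\<^sub>M PiM {..<n} (\<lambda>_. Rp p))"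
    unfolding pd_def lik_def Rp_def by measurable
  show "(\<lambda>z. ennreal (Fb p n a r (fst z) (snd z))) \<in> borel_measurable (Rp p \<Otimes>\<^sub>M PiM {..<n} (\<lambda>_. Rp p))"
    unfolding Fb_def lik_def Rp_def by measurable
qed

lemma meas_E:
  assumes a: "a \<in> measurable (PiM {..<n} (\<lambda>_. Rp p)) (Rp p)"
  shows "{X \<in> space (PiM {..<n} (\<lambda>_. Rp p)). euclid_dist p \<theta> (a X) < r} \<in> sets (PiM {..<n} (\<lambda>_. Rp p))"
    and "{X \<in> space (PiM {..<n} (\<lambda>_. Rp p)). r \<le> euclid_dist p \<theta> (a X)} \<in> sets (PiM {..<n} (\<lambda>_. Rp p))"
proof -
  note a' = a[unfolded Rp_def]
  have ai[measurable]: "\<And>i. i \<in> {..<p} \<Longrightarrow> (\<lambda>x. a x i) \<in> borel_measurable (PiM {..<n} (\<lambda>_. PiM {..<p} (\<lambda>_. lborel)))"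
  proof -
    fix i :: nat assume "i \<in> {..<p}"
    then have "(\<lambda>x. x i) \<in> measurable (PiM {..<p} (\<lambda>_. lborel :: real measure)) lborel"
      by (rule measurable_component_singleton)
    from measurable_compose[OF a' this] show "(\<lambda>x. a x i) \<in> borel_measurable (PiM {..<n} (\<lambda>_. PiM {..<p} (\<lambda>_. lborel)))"
      by (simp add: comp_def)
  qed
  show "{X \<in> space (PiM {..<n} (\<lambda>_. Rp p)). euclid_dist p \<theta> (a X) < r} \<in> sets (PiM {..<n} (\<lambda>_. Rp p))"
    unfolding euclid_dist_def Rp_def by measurable
  show "{X \<in> space (PiM {..<n} (\<lambda>_. Rp p)). r \<le> euclid_dist p \<theta> (a X)} \<in> sets (PiM {..<n} (\<lambda>_. Rp p))"
    unfolding euclid_dist_def Rp_def by measurable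
qed




lemma sf_L: "sigma_finite_measure (PiM {..<n::nat} (\<lambda>_. Rp p))"
proof -
  interpret PS: product_sigma_finite "\<lambda>_::nat. Rp p"
    unfolding product_sigma_finite_def by (simp add: sf_Rp)
  show ?thesis by (rule PS.sigma_finite) simp
qed

lemma meas_xji:
  "j \<in> J \<Longrightarrow> i \<in> I \<Longrightarrow> (\<lambda>x. x j i) \<in> measurable (PiM J (\<lambda>_. PiM I (\<lambda>_. N))) N"
  by (rule measurable_compose[OF measurable_component_singleton[of j J] measurable_component_singleton[of i I]])

lemma meas_Xji:
  "j \<in> {..<n} \<Longrightarrow> i \<in> {..<p} \<Longrightarrow> (\<lambda>X. X j i) \<in> borel_measurable (PiM {..<n} (\<lambda>_. PiM {..<p} (\<lambda>_. lborel :: real measure)))"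
  using meas_xji[of j "{..<n}" i "{..<p}" "lborel :: real measure"] by simp

lemma lik_meas: "(\<lambda>X. ennreal (lik p n \<theta> X)) \<in> borel_measurable (PiM {..<n} (\<lambda>_. Rp p))"
proof -
  have g: "(\<lambda>x. \<Prod>i<p. normal_density (\<theta> i) 1 (x i)) \<in> borel_measurable (Rp p)"
    unfolding Rp_def by measurable
  have "(\<lambda>X. \<Prod>j<n. (\<lambda>x. \<Prod>i<p. normal_density (\<theta> i) 1 (x i)) (X j)) \<in> borel_measurable (PiM {..<n} (\<lambda>_. Rp p))"
    by (intro borel_measurable_prod measurable_compose[OF measurable_component_singleton[where M="\<lambda>_. Rp p"] g]) simp
  then show ?thesis unfolding lik_def by simp
qed

lemma lik_total:
  "(\<integral>\<^sup>+X. ennreal (lik p n \<theta> X) \<partial>PiM {..<n} (\<lambda>_. Rp p)) = 1"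
proof -
  interpret prob_space "sample n (gauss p \<theta>)"
    unfolding sample_def by (rule prob_space_PiM) (simp add: prob_space_gauss)
  have "1 = emeasure (sample n (gauss p \<theta>)) (space (sample n (gauss p \<theta>)))"
    by (rule emeasure_space_1[symmetric])
  also have "\<dots> = (\<integral>\<^sup>+X. ennreal (lik p n \<theta> X) * indicator (space (PiM {..<n} (\<lambda>_. Rp p))) X \<partial>PiM {..<n} (\<lambda>_. Rp p))"
    unfolding sample_density by (subst emeasure_density[OF lik_meas]) auto
  also have "\<dots> = (\<integral>\<^sup>+X. ennreal (lik p n \<theta> X) \<partial>PiM {..<n} (\<lambda>_. Rp p))"
    by (intro nn_integral_cong) simp
  finally show ?thesis by simp
qed

lemma prior_density:
  "PiM {..<p} (\<lambda>i. density lborel (normal_density 0 (1 / sqrt n))) = density (Rp p) (\<lambda>\<theta>. ennreal (pd p n \<theta>))"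
  if "n \<ge> 1"
  using normal_prod_density[of "1 / sqrt n" p "\<lambda>_. 0"] that unfolding pd_def by simp

lemma pd_nonneg: "pd p n \<theta> \<ge> 0"
  unfolding pd_def by (intro prod_nonneg) (simp add: normal_density_nonneg)

lemma pd_meas: "(\<lambda>\<theta>. ennreal (pd p n \<theta>)) \<in> borel_measurable (Rp p)"
  unfolding pd_def Rp_def by measurable

lemma prior_total:
  assumes "n \<ge> 1"
  shows "(\<integral>\<^sup>+\<theta>. ennreal (pd p n \<theta>) \<partial>Rp p) = 1"
proof -
  interpret prob_space "PiM {..<p} (\<lambda>i. density lborel (normal_density 0 (1 / sqrt n)))"
    by (rule prob_space_normal_prod) (use assms in simp)
  have "1 = emeasure (density (Rp p) (\<lambda>\<theta>. ennreal (pd p n \<theta>))) (space (Rp p))"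
    using emeasure_space_1 unfolding prior_density[OF assms] space_density by (rule sym)
  also have "\<dots> = (\<integral>\<^sup>+\<theta>. ennreal (pd p n \<theta>) * indicator (space (Rp p)) \<theta> \<partial>Rp p)"
    by (rule emeasure_density[OF pd_meas]) simp
  also have "\<dots> = (\<integral>\<^sup>+\<theta>. ennreal (pd p n \<theta>) \<partial>Rp p)"
    by (intro nn_integral_cong) simp
  finally show ?thesis by simp
qed




definition hX :: "nat \<Rightarrow> ((nat \<Rightarrow> nat \<Rightarrow> real) \<Rightarrow> (nat \<Rightarrow> real)) \<Rightarrow> (nat \<Rightarrow> nat \<Rightarrow> real) \<Rightarrow> nat \<Rightarrow> real \<Rightarrow> real" where
  "hX n a X i t = normal_density 0 (1 / sqrt n) t * (\<Prod>j<n. normal_density t 1 (X j i)) * exp (- (3 * real n) * (t - a X i)\<^sup>2)"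

definition h0 :: "nat \<Rightarrow> (nat \<Rightarrow> nat \<Rightarrow> real) \<Rightarrow> nat \<Rightarrow> real \<Rightarrow> real" where
  "h0 n X i t = normal_density 0 (1 / sqrt n) t * (\<Prod>j<n. normal_density t 1 (X j i))"

lemma PI: "pd p n \<theta> * Fb p n a r \<theta> X = exp (3 * real n * r\<^sup>2) * (\<Prod>i<p. hX n a X i (\<theta> i))"
proof -
  have e: "exp (- (3 * real n) * (\<Sum>i<p. (\<theta> i - a X i)\<^sup>2)) = (\<Prod>i<p. exp (- (3 * real n) * (\<theta> i - a X i)\<^sup>2))"
    by (simp add: sum_distrib_left exp_sum)
  have l: "lik p n \<theta> X = (\<Prod>i<p. \<Prod>j<n. normal_density (\<theta> i) 1 (X j i))"
    unfolding lik_def by (rule prod.swap)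
  show ?thesis unfolding pd_def Fb_def hX_def e l
    by (simp add: prod.distrib mult_ac)
qed

lemma PI0: "pd p n \<theta> * lik p n \<theta> X = (\<Prod>i<p. h0 n X i (\<theta> i))"
proof -
  have l: "lik p n \<theta> X = (\<Prod>i<p. \<Prod>j<n. normal_density (\<theta> i) 1 (X j i))"
    unfolding lik_def by (rule prod.swap)
  show ?thesis unfolding pd_def h0_def l by (simp add: prod.distrib)
qed

lemma hX_nonneg: "hX n a X i t \<ge> 0"
  unfolding hX_def by (intro mult_nonneg_nonneg prod_nonneg) (auto simp: normal_density_nonneg)

lemma h0_nonneg: "h0 n X i t \<ge> 0"
  unfolding h0_def by (intro mult_nonneg_nonneg prod_nonneg) (auto simp: normal_density_nonneg)

lemma per_X:
  assumes n: "n \<ge> 1"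
  shows "(\<integral>\<^sup>+\<theta>. ennreal (pd p n \<theta> * Fb p n a r \<theta> X) \<partial>Rp p)
    \<le> ennreal (exp (3 * real n * r\<^sup>2) * (1/2)^p) * (\<integral>\<^sup>+\<theta>. ennreal (pd p n \<theta> * lik p n \<theta> X) \<partial>Rp p)"
proof -
  interpret PS: product_sigma_finite "\<lambda>_::nat. lborel :: real measure"
    unfolding product_sigma_finite_def by (simp add: sigma_finite_lborel)
  have mX: "(\<lambda>t. ennreal (hX n a X i t)) \<in> borel_measurable lborel" for i
    unfolding hX_def normal_density_def by measurable
  have mXb[measurable]: "(\<lambda>t. ennreal (hX n a X i t)) \<in> borel_measurable borel" for i
    unfolding hX_def normal_density_def by measurable
  have m0b[measurable]: "(\<lambda>t. ennreal (h0 n X i t)) \<in> borel_measurable borel" for i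
    unfolding h0_def normal_density_def by measurable
  have m0: "(\<lambda>t. ennreal (h0 n X i t)) \<in> borel_measurable lborel" for i
    unfolding h0_def normal_density_def by measurable
  have "(\<integral>\<^sup>+\<theta>. ennreal (pd p n \<theta> * Fb p n a r \<theta> X) \<partial>Rp p)
      = (\<integral>\<^sup>+\<theta>. ennreal (exp (3 * real n * r\<^sup>2)) * (\<Prod>i<p. ennreal (hX n a X i (\<theta> i))) \<partial>Rp p)"
    unfolding PI by (intro nn_integral_cong) (simp add: ennreal_mult prod_ennreal hX_nonneg prod_nonneg)
  also have "\<dots> = ennreal (exp (3 * real n * r\<^sup>2)) * (\<integral>\<^sup>+\<theta>. (\<Prod>i<p. ennreal (hX n a X i (\<theta> i))) \<partial>Rp p)"
    by (rule nn_integral_cmult) (unfold Rp_def, use mXb in measurable)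
  finally have A: "(\<integral>\<^sup>+\<theta>. ennreal (pd p n \<theta> * Fb p n a r \<theta> X) \<partial>Rp p)
     = ennreal (exp (3 * real n * r\<^sup>2)) * (\<integral>\<^sup>+\<theta>. (\<Prod>i<p. ennreal (hX n a X i (\<theta> i))) \<partial>Rp p)" .
  have "(\<integral>\<^sup>+\<theta>. (\<Prod>i<p. ennreal (hX n a X i (\<theta> i))) \<partial>Rp p) = (\<Prod>i<p. \<integral>\<^sup>+t. ennreal (hX n a X i t) \<partial>lborel)"
    unfolding Rp_def by (rule PS.product_nn_integral_prod) (auto simp: mX)
  also have "\<dots> \<le> (\<Prod>i<p. ennreal (1/2) * \<integral>\<^sup>+t. ennreal (h0 n X i t) \<partial>lborel)"
    by (intro prod_mono_ennreal) (unfold hX_def h0_def, rule coord_bound[OF n])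
  also have "\<dots> = ennreal (1/2) ^ p * (\<Prod>i<p. \<integral>\<^sup>+t. ennreal (h0 n X i t) \<partial>lborel)"
    by (simp add: prod.distrib)
  also have "(\<Prod>i<p. \<integral>\<^sup>+t. ennreal (h0 n X i t) \<partial>lborel) = (\<integral>\<^sup>+\<theta>. (\<Prod>i<p. ennreal (h0 n X i (\<theta> i))) \<partial>Rp p)"
    unfolding Rp_def by (rule PS.product_nn_integral_prod[symmetric]) (auto simp: m0 m0b)
  also have "\<dots> = (\<integral>\<^sup>+\<theta>. ennreal (pd p n \<theta> * lik p n \<theta> X) \<partial>Rp p)"
    unfolding PI0 by (intro nn_integral_cong) (simp add: prod_ennreal h0_nonneg)
  finally have B: "(\<integral>\<^sup>+\<theta>. (\<Prod>i<p. ennreal (hX n a X i (\<theta> i))) \<partial>Rp p)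
     \<le> ennreal (1/2) ^ p * (\<integral>\<^sup>+\<theta>. ennreal (pd p n \<theta> * lik p n \<theta> X) \<partial>Rp p)" .
  have "ennreal (exp (3 * real n * r\<^sup>2)) * (\<integral>\<^sup>+\<theta>. (\<Prod>i<p. ennreal (hX n a X i (\<theta> i))) \<partial>Rp p)
     \<le> ennreal (exp (3 * real n * r\<^sup>2)) * (ennreal (1/2) ^ p * (\<integral>\<^sup>+\<theta>. ennreal (pd p n \<theta> * lik p n \<theta> X) \<partial>Rp p))"
    by (rule mult_left_mono[OF B]) simp
  also have "\<dots> = ennreal (exp (3 * real n * r\<^sup>2) * (1/2)^p) * (\<integral>\<^sup>+\<theta>. ennreal (pd p n \<theta> * lik p n \<theta> X) \<partial>Rp p)"
  proof -
    have q: "ennreal (exp (3 * real n * r\<^sup>2) * (1/2)^p) = ennreal (exp (3 * real n * r\<^sup>2)) * ennreal (1/2) ^ p"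
      by (subst ennreal_mult) (auto simp only: ennreal_power[symmetric] intro: zero_le_power less_imp_le[OF exp_gt_zero])
    show ?thesis unfolding q by (simp only: mult.assoc)
  qed
  finally show ?thesis using A by simp

qed




lemma emeasure_E_le:
  assumes a: "a \<in> measurable (PiM {..<n} (\<lambda>_. Rp p)) (Rp p)"
  shows "emeasure (sample n (gauss p \<theta>)) {X \<in> space (PiM {..<n} (\<lambda>_. Rp p)). euclid_dist p \<theta> (a X) < r}
    \<le> (\<integral>\<^sup>+X. ennreal (Fb p n a r \<theta> X) \<partial>PiM {..<n} (\<lambda>_. Rp p))"
proof -
  let ?E = "{X \<in> space (PiM {..<n} (\<lambda>_. Rp p)). euclid_dist p \<theta> (a X) < r}"
  have "emeasure (sample n (gauss p \<theta>)) ?E = (\<integral>\<^sup>+X. ennreal (lik p n \<theta> X) * indicator ?E X \<partial>PiM {..<n} (\<lambda>_. Rp p))"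
    unfolding sample_density by (rule emeasure_density[OF lik_meas meas_E(1)[OF a]])
  also have "\<dots> \<le> (\<integral>\<^sup>+X. ennreal (Fb p n a r \<theta> X) \<partial>PiM {..<n} (\<lambda>_. Rp p))"
  proof (rule nn_integral_mono)
    fix X
    show "ennreal (lik p n \<theta> X) * indicator ?E X \<le> ennreal (Fb p n a r \<theta> X)"
    proof (cases "X \<in> ?E")
      case True
      define S where "S = (\<Sum>i<p. (\<theta> i - a X i)\<^sup>2)"
      have S0: "S \<ge> 0" unfolding S_def by (intro sum_nonneg) simp
      have "sqrt S < r" using True unfolding S_def euclid_dist_def by simp
      moreover have "(sqrt S)\<^sup>2 = S" using S0 by simp
      ultimately have "S < r\<^sup>2" using power_strict_mono[of "sqrt S" r 2] by simp
      then have E1: "exp (3 * real n * r\<^sup>2) * exp (- (3 * real n) * S) \<ge> 1"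
        using mult_left_mono[of S "r\<^sup>2" "real n"] by (simp add: exp_add[symmetric] algebra_simps)
      have "lik p n \<theta> X \<le> exp (3 * real n * r\<^sup>2) * exp (- (3 * real n) * S) * lik p n \<theta> X"
        using mult_right_mono[OF E1 lik_nonneg[of p n \<theta> X]] by simp
      then show ?thesis using True unfolding Fb_def S_def by (simp add: ennreal_leI)
    next
      case False
      then show ?thesis by simp
    qed
  qed
  finally show ?thesis .
qed




lemma Fb_nonneg: "Fb p n a r \<theta> X \<ge> 0"
  unfolding Fb_def using lik_nonneg[of p n \<theta> X] by simp

lemma bayes_bound:
  assumes n: "n \<ge> 1" and a: "a \<in> measurable (PiM {..<n} (\<lambda>_. Rp p)) (Rp p)"
  shows "(\<integral>\<^sup>+\<theta>. emeasure (sample n (gauss p \<theta>)) {X \<in> space (PiM {..<n} (\<lambda>_. Rp p)). euclid_dist p \<theta> (a X) < r}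
      \<partial>PiM {..<p} (\<lambda>i. density lborel (normal_density 0 (1 / sqrt n))))
    \<le> ennreal (exp (3 * real n * r\<^sup>2) * (1/2)^p)"
proof -
  define L where "L = PiM {..<n} (\<lambda>_. Rp p)"
  define C where "C = exp (3 * real n * r\<^sup>2) * (1/2::real)^p"
  interpret PS2: pair_sigma_finite "Rp p" L
    unfolding pair_sigma_finite_def L_def using sf_Rp sf_L by auto
  have j1: "case_prod (\<lambda>\<theta> X. ennreal (pd p n \<theta> * Fb p n a r \<theta> X)) \<in> borel_measurable (Rp p \<Otimes>\<^sub>M L)"
    using meas_joint(1)[OF a, of r] unfolding L_def by (simp add: split_beta')
  have j2: "case_prod (\<lambda>\<theta> X. ennreal (pd p n \<theta> * lik p n \<theta> X)) \<in> borel_measurable (Rp p \<Otimes>\<^sub>M L)"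
    using meas_joint(2)[OF a] unfolding L_def by (simp add: split_beta')
  have j3: "case_prod (\<lambda>\<theta> X. ennreal (Fb p n a r \<theta> X)) \<in> borel_measurable (Rp p \<Otimes>\<^sub>M L)"
    using meas_joint(3)[OF a, of r] unfolding L_def by (simp add: split_beta')
  have j2c: "case_prod (\<lambda>\<theta> X. ennreal C * ennreal (pd p n \<theta> * lik p n \<theta> X)) \<in> borel_measurable (Rp p \<Otimes>\<^sub>M L)"
    using j2 by (simp add: split_beta')
  have Fb_X: "(\<lambda>X. ennreal (Fb p n a r \<theta> X)) \<in> borel_measurable L" if "\<theta> \<in> space (Rp p)" for \<theta>
    using measurable_Pair2[OF j3 that] by simp
  have pl_th: "(\<lambda>\<theta>. ennreal (pd p n \<theta> * lik p n \<theta> X)) \<in> borel_measurable (Rp p)" if "X \<in> space L" for X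
    using measurable_Pair1[OF j2 that] by simp
  have intFb: "(\<lambda>\<theta>. \<integral>\<^sup>+X. ennreal (Fb p n a r \<theta> X) \<partial>L) \<in> borel_measurable (Rp p)"
    by (rule PS2.M2.borel_measurable_nn_integral[OF j3])
  have "(\<integral>\<^sup>+\<theta>. emeasure (sample n (gauss p \<theta>)) {X \<in> space (PiM {..<n} (\<lambda>_. Rp p)). euclid_dist p \<theta> (a X) < r}
      \<partial>PiM {..<p} (\<lambda>i. density lborel (normal_density 0 (1 / sqrt n))))
    \<le> (\<integral>\<^sup>+\<theta>. (\<integral>\<^sup>+X. ennreal (Fb p n a r \<theta> X) \<partial>L) \<partial>PiM {..<p} (\<lambda>i. density lborel (normal_density 0 (1 / sqrt n))))"
    unfolding L_def by (intro nn_integral_mono emeasure_E_le[OF a])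
  also have "\<dots> = (\<integral>\<^sup>+\<theta>. ennreal (pd p n \<theta>) * (\<integral>\<^sup>+X. ennreal (Fb p n a r \<theta> X) \<partial>L) \<partial>Rp p)"
    unfolding prior_density[OF n] by (rule nn_integral_density[OF pd_meas intFb])
  also have "\<dots> = (\<integral>\<^sup>+\<theta>. (\<integral>\<^sup>+X. ennreal (pd p n \<theta> * Fb p n a r \<theta> X) \<partial>L) \<partial>Rp p)"
  proof (intro nn_integral_cong)
    fix \<theta> assume "\<theta> \<in> space (Rp p)"
    then show "ennreal (pd p n \<theta>) * (\<integral>\<^sup>+X. ennreal (Fb p n a r \<theta> X) \<partial>L) = (\<integral>\<^sup>+X. ennreal (pd p n \<theta> * Fb p n a r \<theta> X) \<partial>L)"
      by (subst nn_integral_cmult[symmetric, OF Fb_X]) (auto simp: ennreal_mult pd_nonneg Fb_nonneg)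
  qed
  also have "\<dots> = (\<integral>\<^sup>+X. (\<integral>\<^sup>+\<theta>. ennreal (pd p n \<theta> * Fb p n a r \<theta> X) \<partial>Rp p) \<partial>L)"
    by (rule PS2.Fubini'[OF j1, symmetric])
  also have "\<dots> \<le> (\<integral>\<^sup>+X. ennreal C * (\<integral>\<^sup>+\<theta>. ennreal (pd p n \<theta> * lik p n \<theta> X) \<partial>Rp p) \<partial>L)"
    unfolding C_def by (intro nn_integral_mono per_X[OF n])
  also have "\<dots> = (\<integral>\<^sup>+X. (\<integral>\<^sup>+\<theta>. ennreal C * ennreal (pd p n \<theta> * lik p n \<theta> X) \<partial>Rp p) \<partial>L)"
    by (intro nn_integral_cong nn_integral_cmult[symmetric] pl_th)
  also have "\<dots> = (\<integral>\<^sup>+\<theta>. (\<integral>\<^sup>+X. ennreal C * ennreal (pd p n \<theta> * lik p n \<theta> X) \<partial>L) \<partial>Rp p)"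
    by (rule PS2.Fubini'[OF j2c])
  also have "\<dots> = (\<integral>\<^sup>+\<theta>. ennreal C * ennreal (pd p n \<theta>) \<partial>Rp p)"
  proof (intro nn_integral_cong)
    fix \<theta> assume "\<theta> \<in> space (Rp p)"
    have "(\<integral>\<^sup>+X. ennreal C * ennreal (pd p n \<theta> * lik p n \<theta> X) \<partial>L)
        = (\<integral>\<^sup>+X. (ennreal C * ennreal (pd p n \<theta>)) * ennreal (lik p n \<theta> X) \<partial>L)"
      by (intro nn_integral_cong) (simp add: ennreal_mult pd_nonneg lik_nonneg mult_ac)
    also have "\<dots> = (ennreal C * ennreal (pd p n \<theta>)) * (\<integral>\<^sup>+X. ennreal (lik p n \<theta> X) \<partial>L)"
      unfolding L_def by (rule nn_integral_cmult[OF lik_meas])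
    also have "\<dots> = ennreal C * ennreal (pd p n \<theta>)"
      unfolding L_def lik_total by simp
    finally show "(\<integral>\<^sup>+X. ennreal C * ennreal (pd p n \<theta> * lik p n \<theta> X) \<partial>L) = ennreal C * ennreal (pd p n \<theta>)" .
  qed
  also have "\<dots> = ennreal C * (\<integral>\<^sup>+\<theta>. ennreal (pd p n \<theta>) \<partial>Rp p)"
    by (rule nn_integral_cmult[OF pd_meas])
  also have "\<dots> = ennreal C"
    using prior_total[OF n] by simp
  finally show ?thesis unfolding C_def .
qed




lemma num_bound:
  assumes p: "p \<ge> (1::nat)"
  shows "exp (3 * real p / 16) * (1/2::real)^p < 4/5"
proof -
  have e: "exp (3/16::real) \<le> 1 + 2 * (3/16)"
    using exp_bound_lemma[of "3/16::real"] by simp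
  define q where "q = exp (3/16::real) / 2"
  have q0: "0 \<le> q" and q1: "q \<le> 11/16" unfolding q_def using e by auto
  have "exp (3 * real p / 16) * (1/2::real)^p = q ^ p"
  proof -
    have "exp (3 * real p / 16) = exp (3/16::real) ^ p"
      by (subst exp_of_nat_mult[symmetric]) (simp add: field_simps)
    then show ?thesis unfolding q_def by (simp add: power_divide)
  qed
  also have "q ^ p \<le> q ^ 1"
    using q0 q1 p by (intro power_decreasing) auto
  also have "\<dots> < 4/5" using q1 by simp
  finally show ?thesis .
qed

lemma euclid_dist_L2: "euclid_dist p x y = L2_set (\<lambda>i. x i - y i) {..<p}"
  unfolding euclid_dist_def L2_set_def by simp

lemma euclid_dist_sym: "euclid_dist p x y = euclid_dist p y x"
  unfolding euclid_dist_def by (simp add: power2_commute)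

lemma euclid_dist_triangle: "euclid_dist p x z \<le> euclid_dist p x y + euclid_dist p y z"
proof -
  have "euclid_dist p x z = L2_set (\<lambda>i. (x i - y i) + (y i - z i)) {..<p}"
    unfolding euclid_dist_L2 by simp
  also have "\<dots> \<le> L2_set (\<lambda>i. x i - y i) {..<p} + L2_set (\<lambda>i. y i - z i) {..<p}"
    by (rule L2_set_triangle_ineq)
  finally show ?thesis unfolding euclid_dist_L2 .
qed

lemma euclid_dist_self: "euclid_dist p x x = 0"
  unfolding euclid_dist_def by simp

lemma gauss_in_model: "\<epsilon> \<ge> 0 \<Longrightarrow> gauss p \<theta> \<in> robust_model p \<theta> \<epsilon>"
  unfolding robust_model_def using W_gauss[of p \<theta> \<theta>]
  by (auto simp: prob_space_gauss sets_gauss euclid_dist_self intro: order_trans)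

lemma prob_space_sample: "prob_space P \<Longrightarrow> prob_space (sample n P)"
  unfolding sample_def by (rule prob_space_PiM) simp

lemma sets_sample: "sets P = sets (Rp p) \<Longrightarrow> sets (sample n P) = sets (PiM {..<n::nat} (\<lambda>_. Rp p))"
  unfolding sample_def by (rule sets_PiM_cong) simp_all

lemma space_sample: "sets P = sets (Rp p) \<Longrightarrow> space (sample n P) = space (PiM {..<n::nat} (\<lambda>_. Rp p))"
  using sets_sample[of P p n] by (rule sets_eq_imp_space_eq)




lemma gauss_case:
  assumes p: "p \<ge> 1" and n: "n \<ge> 1" and a: "a \<in> measurable (PiM {..<n} (\<lambda>_. Rp p)) (Rp p)"
  shows "\<exists>\<theta> \<in> space (Rp p). measure (sample n (gauss p \<theta>))
     {X \<in> space (sample n (gauss p \<theta>)). (1/4) * sqrt (real p / real n) \<le> euclid_dist p \<theta> (a X)} \<ge> 1/5"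
proof (rule ccontr)
  define r where "r = (1/4) * sqrt (real p / real n)"
  define \<pi> where "\<pi> = PiM {..<p} (\<lambda>i. density lborel (normal_density 0 (1 / sqrt n)))"
  assume "\<not> ?thesis"
  then have small: "measure (sample n (gauss p \<theta>)) {X \<in> space (sample n (gauss p \<theta>)). r \<le> euclid_dist p \<theta> (a X)} < 1/5"
    if "\<theta> \<in> space (Rp p)" for \<theta>
    using that unfolding r_def by force
  interpret PI: prob_space \<pi> unfolding \<pi>_def by (rule prob_space_normal_prod) (use n in simp)
  have sp\<pi>: "space \<pi> = space (Rp p)" unfolding \<pi>_def Rp_def by (simp add: space_PiM)
  have r2: "3 * real n * r\<^sup>2 = 3 * real p / 16"
    unfolding r_def using n by (simp add: power_mult_distrib field_simps)
  have big: "ennreal (4/5) \<le> emeasure (sample n (gauss p \<theta>)) {X \<in> space (PiM {..<n} (\<lambda>_. Rp p)). euclid_dist p \<theta> (a X) < r}"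
    if th: "\<theta> \<in> space (Rp p)" for \<theta>
  proof -
    interpret M: prob_space "sample n (gauss p \<theta>)" by (intro prob_space_sample prob_space_gauss)
    have spM: "space (sample n (gauss p \<theta>)) = space (PiM {..<n} (\<lambda>_. Rp p))"
      by (rule space_sample[OF sets_gauss])
    have sM: "sets (sample n (gauss p \<theta>)) = sets (PiM {..<n} (\<lambda>_. Rp p))"
      by (rule sets_sample[OF sets_gauss])
    let ?F = "{X \<in> space (sample n (gauss p \<theta>)). r \<le> euclid_dist p \<theta> (a X)}"
    have Fm: "?F \<in> M.events" unfolding spM sM by (rule meas_E(2)[OF a])
    have E: "{X \<in> space (PiM {..<n} (\<lambda>_. Rp p)). euclid_dist p \<theta> (a X) < r} = space (sample n (gauss p \<theta>)) - ?F"
      unfolding spM by auto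
    have "M.prob (space (sample n (gauss p \<theta>)) - ?F) = 1 - M.prob ?F"
      by (rule M.prob_compl[OF Fm])
    also have "\<dots> > 4/5" using small[OF th] by simp
    finally have "4/5 < M.prob (space (sample n (gauss p \<theta>)) - ?F)" .
    then show ?thesis unfolding E M.emeasure_eq_measure by (simp add: ennreal_leI)
  qed
  have "ennreal (4/5) = (\<integral>\<^sup>+\<theta>. ennreal (4/5) \<partial>\<pi>)"
    by (simp add: PI.emeasure_space_1)
  also have "\<dots> \<le> (\<integral>\<^sup>+\<theta>. emeasure (sample n (gauss p \<theta>)) {X \<in> space (PiM {..<n} (\<lambda>_. Rp p)). euclid_dist p \<theta> (a X) < r} \<partial>\<pi>)"
    by (intro nn_integral_mono big) (simp add: sp\<pi>)
  also have "\<dots> \<le> ennreal (exp (3 * real n * r\<^sup>2) * (1/2)^p)"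
    unfolding \<pi>_def by (rule bayes_bound[OF n a])
  also have "\<dots> < ennreal (4/5)"
    unfolding r2 using num_bound[OF p] by (simp add: ennreal_lessI)
  finally show False by simp
qed




lemma eps_case:
  assumes p: "p \<ge> 1" and e: "\<epsilon> > 0" and a: "a \<in> measurable (PiM {..<n} (\<lambda>_. Rp p)) (Rp p)"
  shows "\<exists>\<theta> \<in> space (Rp p). \<exists>P \<in> robust_model p \<theta> \<epsilon>. measure (sample n P)
     {X \<in> space (sample n P). (1/4) * \<epsilon> \<le> euclid_dist p \<theta> (a X)} \<ge> 1/5"
proof -
  define \<theta>1 where "\<theta>1 = (\<lambda>i\<in>{..<p}. 0::real)"
  define \<theta>2 where "\<theta>2 = (\<lambda>i\<in>{..<p}. if i = 0 then \<epsilon> else 0::real)"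
  have s1: "\<theta>1 \<in> space (Rp p)" and s2: "\<theta>2 \<in> space (Rp p)"
    unfolding \<theta>1_def \<theta>2_def space_Rp by auto
  have "(\<Sum>i<p. (\<theta>2 i - \<theta>1 i)\<^sup>2) = (\<Sum>i<p. if i = 0 then \<epsilon>\<^sup>2 else 0)"
    unfolding \<theta>1_def \<theta>2_def by (intro sum.cong) auto
  also have "\<dots> = \<epsilon>\<^sup>2" using p by (simp add: sum.delta)
  finally have d12: "euclid_dist p \<theta>2 \<theta>1 = \<epsilon>" unfolding euclid_dist_def using e by simp
  define P where "P = gauss p \<theta>1"
  have P1: "P \<in> robust_model p \<theta>1 \<epsilon>" unfolding P_def using e by (intro gauss_in_model) simp
  have P2: "P \<in> robust_model p \<theta>2 \<epsilon>"
    unfolding robust_model_def P_def using W_gauss[of p \<theta>2 \<theta>1] d12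
    by (simp add: prob_space_gauss sets_gauss)
  interpret M: prob_space "sample n P" unfolding P_def by (intro prob_space_sample prob_space_gauss)
  have spM: "space (sample n P) = space (PiM {..<n} (\<lambda>_. Rp p))"
    unfolding P_def by (rule space_sample[OF sets_gauss])
  have sM: "sets (sample n P) = sets (PiM {..<n} (\<lambda>_. Rp p))"
    unfolding P_def by (rule sets_sample[OF sets_gauss])
  define F where "F \<theta> = {X \<in> space (sample n P). (1/4) * \<epsilon> \<le> euclid_dist p \<theta> (a X)}" for \<theta>
  have Fm: "F \<theta> \<in> M.events" for \<theta> unfolding F_def spM sM by (rule meas_E(2)[OF a])
  have cover: "space (sample n P) = F \<theta>1 \<union> F \<theta>2"
  proof (rule set_eqI, rule iffI)
    fix X assume X: "X \<in> space (sample n P)"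
    show "X \<in> F \<theta>1 \<union> F \<theta>2"
    proof (rule ccontr)
      assume "X \<notin> F \<theta>1 \<union> F \<theta>2"
      then have "euclid_dist p \<theta>2 (a X) < (1/4) * \<epsilon>" "euclid_dist p \<theta>1 (a X) < (1/4) * \<epsilon>"
        using X unfolding F_def by auto
      moreover have "euclid_dist p \<theta>2 \<theta>1 \<le> euclid_dist p \<theta>2 (a X) + euclid_dist p (a X) \<theta>1"
        by (rule euclid_dist_triangle)
      moreover have "euclid_dist p (a X) \<theta>1 = euclid_dist p \<theta>1 (a X)" by (rule euclid_dist_sym)
      ultimately show False using d12 e by simp
    qed
  qed (auto simp: F_def)
  have "1 = M.prob (F \<theta>1 \<union> F \<theta>2)" using M.prob_space cover by simp
  also have "\<dots> \<le> M.prob (F \<theta>1) + M.prob (F \<theta>2)"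
    by (rule measure_subadditive[OF Fm Fm]) (simp_all add: M.emeasure_eq_measure)
  finally have "M.prob (F \<theta>1) \<ge> 1/5 \<or> M.prob (F \<theta>2) \<ge> 1/5" by linarith
  then show ?thesis
    using s1 s2 P1 P2 unfolding F_def by blast
qed





lemma key:
  assumes p: "p \<ge> 1" and n: "n \<ge> 1" and e: "\<epsilon> \<ge> 0" and a: "a \<in> measurable (PiM {..<n} (\<lambda>_. Rp p)) (Rp p)"
  shows "\<exists>\<theta> \<in> space (Rp p). \<exists>P \<in> robust_model p \<theta> \<epsilon>. measure (sample n P)
     {X \<in> space (sample n P). (1/4) * max (sqrt (real p / real n)) \<epsilon> \<le> euclid_dist p \<theta> (a X)} \<ge> 1/5"
proof (cases "\<epsilon> \<le> sqrt (real p / real n)")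
  case True
  then have m: "max (sqrt (real p / real n)) \<epsilon> = sqrt (real p / real n)" by simp
  obtain \<theta> where th: "\<theta> \<in> space (Rp p)" and
    b: "measure (sample n (gauss p \<theta>)) {X \<in> space (sample n (gauss p \<theta>)). (1/4) * sqrt (real p / real n) \<le> euclid_dist p \<theta> (a X)} \<ge> 1/5"
    using gauss_case[OF p n a] by blast
  show ?thesis unfolding m using th gauss_in_model[OF e] b by blast
next
  case False
  then have m: "max (sqrt (real p / real n)) \<epsilon> = \<epsilon>" by simp
  have "\<epsilon> > 0" using False by (smt (verit) real_sqrt_ge_zero of_nat_0_le_iff divide_nonneg_nonneg)
  show ?thesis unfolding m by (rule eps_case[OF p \<open>\<epsilon> > 0\<close> a])
qed

lemma main_bound:
  fixes p n :: nat and \<epsilon> :: real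
  assumes p: "p \<ge> 1" and n: "n \<ge> 1" and e: "\<epsilon> \<ge> 0"
  shows "(INF \<theta>h \<in> estimators p n.
       SUP \<theta> \<in> space (Rp p). SUP P \<in> robust_model p \<theta> \<epsilon>.
         measure (sample n P)
           {X \<in> space (sample n P).
              (1/4::real) * max (sqrt (real p / real n)) \<epsilon> \<le> euclid_dist p \<theta> (\<theta>h X)}) \<ge> 1/5"
proof -
  define V where "V \<theta>h \<theta> P = measure (sample n P)
           {X \<in> space (sample n P). (1/4::real) * max (sqrt (real p / real n)) \<epsilon> \<le> euclid_dist p \<theta> (\<theta>h X)}"
    for \<theta>h :: "(nat \<Rightarrow> nat \<Rightarrow> real) \<Rightarrow> (nat \<Rightarrow> real)" and \<theta> P
  have le1: "V \<theta>h \<theta> P \<le> 1" if "P \<in> robust_model p \<theta> \<epsilon>" for \<theta>h \<theta> P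
  proof -
    interpret prob_space "sample n P"
      using that unfolding robust_model_def by (intro prob_space_sample) simp
    show ?thesis unfolding V_def by (rule prob_le_1)
  qed
  have ne: "robust_model p \<theta> \<epsilon> \<noteq> {}" for \<theta> using gauss_in_model[OF e] by blast
  have inner_le: "(SUP P \<in> robust_model p \<theta> \<epsilon>. V \<theta>h \<theta> P) \<le> 1" for \<theta>h \<theta>
    by (rule cSUP_least[OF ne le1])
  have bdd_in: "bdd_above ((\<lambda>P. V \<theta>h \<theta> P) ` robust_model p \<theta> \<epsilon>)" for \<theta>h \<theta>
    using le1 by (intro bdd_aboveI[of _ 1]) auto
  have bdd_out: "bdd_above ((\<lambda>\<theta>. SUP P \<in> robust_model p \<theta> \<epsilon>. V \<theta>h \<theta> P) ` space (Rp p))" for \<theta>h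
    using inner_le by (intro bdd_aboveI[of _ 1]) auto
  have "1/5 \<le> (INF \<theta>h \<in> estimators p n. SUP \<theta> \<in> space (Rp p). SUP P \<in> robust_model p \<theta> \<epsilon>. V \<theta>h \<theta> P)"
  proof (rule cINF_greatest)
    define z where "z = (\<lambda>i\<in>{..<p}. 0::real)"
    have "z \<in> space (Rp p)" unfolding z_def space_Rp by auto
    then have "(\<lambda>_. z) \<in> estimators p n" unfolding estimators_def by simp
    then show "estimators p n \<noteq> {}" by blast
  next
    fix \<theta>h assume "\<theta>h \<in> estimators p n"
    then have a: "\<theta>h \<in> measurable (PiM {..<n} (\<lambda>_. Rp p)) (Rp p)" unfolding estimators_def .
    obtain \<theta> P where th: "\<theta> \<in> space (Rp p)" and P: "P \<in> robust_model p \<theta> \<epsilon>" and b: "V \<theta>h \<theta> P \<ge> 1/5"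
      using key[OF p n e a] unfolding V_def by blast
    have "1/5 \<le> (SUP P \<in> robust_model p \<theta> \<epsilon>. V \<theta>h \<theta> P)"
      by (rule cSUP_upper2[OF bdd_in P b])
    then show "1/5 \<le> (SUP \<theta> \<in> space (Rp p). SUP P \<in> robust_model p \<theta> \<epsilon>. V \<theta>h \<theta> P)"
      by (rule cSUP_upper2[OF bdd_out th])
  qed
  then show ?thesis by (simp only: V_def)
qed

theorem theorem5:
  shows "\<exists>C>0. \<exists>c>0. \<forall>(p::nat) (n::nat) (\<epsilon>::real). p \<ge> 1 \<longrightarrow> n \<ge> 1 \<longrightarrow> \<epsilon> \<ge> 0 \<longrightarrow>
    (INF \<theta>h \<in> estimators p n.
       SUP \<theta> \<in> space (Rp p). SUP P \<in> robust_model p \<theta> \<epsilon>.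
         measure (sample n P)
           {X \<in> space (sample n P).
              C * max (sqrt (real p / real n)) \<epsilon> \<le> euclid_dist p \<theta> (\<theta>h X)}) \<ge> c"
proof -
  have "(1/4::real) > 0" "(1/5::real) > 0" by simp_all
  then show ?thesis using main_bound by blast
qed


end
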